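(* Every nice graph $G=(V,E)$ with $V\neq\emptyset$ has a good subset.
   Context: All graphs are finite and simple. An edge is isolated if both its ends have degree $1$; a graph is nice if it has no isolated edges. For $J\subseteq V$: $E_{J,2}$ is the set of isolated edges of $G-J$; $E_{J,3}$ the set of edges with exactly one end in $J$; $E_{J,4}$ the set of edges with both ends in $J$; $G_{J,3}=(V,E_{J,3})$ and $G_{J,4}=(J,E_{J,4})$. For $i\in V\setminus J$, if $N_{G_{J,3}}(i)=\{j\}$ then $i$ is a private neighbour of $j$. A set $J\subseteq V$ is a good subset if $J\neq\emptyset$ and: (J1) $G_{J,4}$ has maximum degree at most $1$; (J2) $G_{J,3}$ has no isolated edges; (J3) each $j\in J$ has at most one private neighbour; (J4) for each edge $e=\{j,j'\}\in E_{J,4}$ there is a vertex $i_e\in V\setminus J$ with $\{j,j'\}\subseteq N_{G_{J,3}}(i_e)$, neither $j$ nor $j'$ has a private neighbour, and $i_e\neq i_{e'}$ for distinct $e,e'\in E_{J,4}$; (J5) for every edge $e\in E_{J,2}$, each end vertex of $e$ has at least one neighbour in $J$. *)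

theory Defs
  imports Main
begin

definition simple_graph :: "'a set \<Rightarrow> 'a set set \<Rightarrow> bool" where
  "simple_graph V E \<longleftrightarrow> finite V \<and> (\<forall>e\<in>E. e \<subseteq> V \<and> card e = 2)"

definition nbrs :: "'a set set \<Rightarrow> 'a \<Rightarrow> 'a set" where
  "nbrs E v = {u. {u, v} \<in> E}"

definition deg :: "'a set set \<Rightarrow> 'a \<Rightarrow> nat" where
  "deg E v = card (nbrs E v)"

definition isolated_edge :: "'a set set \<Rightarrow> 'a set \<Rightarrow> bool" where
  "isolated_edge E e \<longleftrightarrow> e \<in> E \<and> (\<forall>v\<in>e. deg E v = 1)"

definition nice :: "'a set \<Rightarrow> 'a set set \<Rightarrow> bool" where
  "nice V E \<longleftrightarrow> simple_graph V E \<and> (\<forall>e\<in>E. \<not> isolated_edge E e)"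

definition del_edges :: "'a set set \<Rightarrow> 'a set \<Rightarrow> 'a set set" where
  "del_edges E J = {e \<in> E. e \<inter> J = {}}"

definition E2 :: "'a set set \<Rightarrow> 'a set \<Rightarrow> 'a set set" where
  "E2 E J = {e. isolated_edge (del_edges E J) e}"

definition E3 :: "'a set set \<Rightarrow> 'a set \<Rightarrow> 'a set set" where
  "E3 E J = {e \<in> E. card (e \<inter> J) = 1}"

definition E4 :: "'a set set \<Rightarrow> 'a set \<Rightarrow> 'a set set" where
  "E4 E J = {e \<in> E. e \<subseteq> J}"

definition private_nbr :: "'a set \<Rightarrow> 'a set set \<Rightarrow> 'a set \<Rightarrow> 'a \<Rightarrow> 'a \<Rightarrow> bool" where
  "private_nbr V E J i j \<longleftrightarrow> i \<in> V - J \<and> nbrs (E3 E J) i = {j}"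

definition good_subset :: "'a set \<Rightarrow> 'a set set \<Rightarrow> 'a set \<Rightarrow> bool" where
  "good_subset V E J \<longleftrightarrow>
     J \<subseteq> V \<and> J \<noteq> {} \<and>
     \<comment> \<open>(J1)\<close> (\<forall>j\<in>J. deg (E4 E J) j \<le> 1) \<and>
     \<comment> \<open>(J2)\<close> (\<forall>e. \<not> isolated_edge (E3 E J) e) \<and>
     \<comment> \<open>(J3)\<close> (\<forall>j\<in>J. card {i. private_nbr V E J i j} \<le> 1) \<and>
     \<comment> \<open>(J4)\<close> (\<exists>ie. inj_on ie (E4 E J) \<and>
          (\<forall>e\<in>E4 E J. ie e \<in> V - J \<and> e \<subseteq> nbrs (E3 E J) (ie e) \<and>
             (\<forall>j\<in>e. \<not> (\<exists>i. private_nbr V E J i j)))) \<and>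
     \<comment> \<open>(J5)\<close> (\<forall>e\<in>E2 E J. \<forall>v\<in>e. \<exists>j\<in>J. {v, j} \<in> E)"

end

theory Submission
  imports Defs "HOL-Library.Product_Lexorder"
begin

locale sg =
  fixes V :: "'a set" and E :: "'a set set"
  assumes sg: "simple_graph V E"
begin

lemma finV: "finite V" using sg by (simp add: simple_graph_def)

lemma edge: "{u,v} \<in> E \<Longrightarrow> u \<noteq> v \<and> u \<in> V \<and> v \<in> V"
proof -
  assume a: "{u,v} \<in> E"
  hence "{u,v} \<subseteq> V" "card {u,v} = 2" using sg by (auto simp: simple_graph_def)
  thus ?thesis by (cases "u = v") auto
qed

lemma edge_sym: "{u,v} \<in> E \<Longrightarrow> {v,u} \<in> E" by (simp add: insert_commute)

lemma edge_cases: "e \<in> E \<Longrightarrow> \<exists>x y. e = {x,y} \<and> x \<noteq> y"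
  using sg by (auto simp: simple_graph_def card_2_iff)

lemma finE: "finite E"
proof -
  have "E \<subseteq> Pow V" using sg by (auto simp: simple_graph_def)
  thus ?thesis using finV by (meson finite_Pow_iff finite_subset)
qed

definition JN :: "'a set \<Rightarrow> 'a \<Rightarrow> 'a set" where
  "JN J v = {w\<in>J. {w,v} \<in> E}"

lemma E3_out: "v \<notin> J \<Longrightarrow> nbrs (E3 E J) v = JN J v"
proof -
  assume v: "v \<notin> J"
  have "card ({u,v} \<inter> J) = 1 \<longleftrightarrow> u \<in> J" for u
  proof (cases "u \<in> J")
    case True hence h: "{u,v} \<inter> J = {u}" using v by auto
    show ?thesis unfolding h using True by simp
  next
    case False hence h: "{u,v} \<inter> J = {}" using v by auto
    show ?thesis unfolding h using False by simp
  qed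
  hence "u \<in> nbrs (E3 E J) v \<longleftrightarrow> u \<in> JN J v" for u
    unfolding nbrs_def E3_def JN_def by blast
  thus ?thesis by blast
qed

lemma E3_in: "v \<in> J \<Longrightarrow> nbrs (E3 E J) v = {u. u \<notin> J \<and> {u,v} \<in> E}"
proof -
  assume v: "v \<in> J"
  have "{u,v} \<in> E \<Longrightarrow> card ({u,v} \<inter> J) = 1 \<longleftrightarrow> u \<notin> J" for u
  proof (cases "u \<in> J")
    case True
    assume "{u,v} \<in> E" hence "u \<noteq> v" using edge by blast
    moreover have h: "{u,v} \<inter> J = {u,v}" using v True by auto
    ultimately show ?thesis unfolding h using True by simp
  next
    case False hence h: "{u,v} \<inter> J = {v}" using v by auto
    show ?thesis unfolding h using False by simp
  qed
  hence "u \<in> nbrs (E3 E J) v \<longleftrightarrow> u \<in> {u. u \<notin> J \<and> {u,v} \<in> E}" for u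
    unfolding nbrs_def E3_def by blast
  thus ?thesis by blast
qed

lemma E4_nb: "nbrs (E4 E J) v = {w. {w,v} \<in> E \<and> w \<in> J \<and> v \<in> J}"
  by (auto simp: nbrs_def E4_def)

lemma fin_nb: "finite (nbrs F v)" if "F \<subseteq> E"
proof -
  have "nbrs F v \<subseteq> V"
  proof
    fix u assume "u \<in> nbrs F v"
    hence "{u,v} \<in> E" using that by (auto simp: nbrs_def)
    thus "u \<in> V" using edge by blast
  qed
  thus ?thesis using finV finite_subset by blast
qed

lemma priv: "private_nbr V E J i j \<longleftrightarrow> i \<in> V - J \<and> JN J i = {j}"
proof (cases "i \<in> J")
  case True thus ?thesis by (simp add: private_nbr_def)
next
  case False thus ?thesis by (simp add: private_nbr_def E3_out)
qed

lemma finJN: "finite (JN J v)"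
proof -
  have "JN J v \<subseteq> V"
  proof
    fix u assume "u \<in> JN J v"
    hence "{u,v} \<in> E" by (auto simp: JN_def)
    thus "u \<in> V" using edge by blast
  qed
  thus ?thesis using finV finite_subset by blast
qed

definition pre :: "'a set \<Rightarrow> bool" where
  "pre J \<longleftrightarrow> J \<subseteq> V \<and> (\<forall>j\<in>J. card (nbrs (E4 E J) j) \<le> 1) \<and>
     (\<exists>ie. inj_on ie (E4 E J) \<and> (\<forall>e\<in>E4 E J. ie e \<in> V - J \<and> (\<forall>u\<in>e. {u, ie e} \<in> E)))"

definition phi :: "'a set \<Rightarrow> int" where
  "phi J = int (card J) - int (card (E4 E J))"

definition pot :: "'a set \<Rightarrow> int \<times> nat \<times> nat" where
  "pot J = (phi J, card J, sum (deg E) J)"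

lemma better:
  "phi J < phi J' \<or> (phi J = phi J' \<and> card J < card J') \<or>
   (phi J = phi J' \<and> card J = card J' \<and> sum (deg E) J < sum (deg E) J') \<Longrightarrow> pot J < pot J'"
  unfolding pot_def by auto

lemma K: "e \<in> E4 E J \<Longrightarrow> \<forall>u\<in>e. {u,c} \<in> E \<Longrightarrow> JN J c \<subseteq> {j} \<Longrightarrow> False"
proof -
  assume e: "e \<in> E4 E J" and a: "\<forall>u\<in>e. {u,c} \<in> E" and s: "JN J c \<subseteq> {j}"
  have "e \<in> E" using e by (simp add: E4_def)
  then obtain x y where xy: "e = {x,y}" "x \<noteq> y" using edge_cases by blast
  have "x \<in> JN J c" "y \<in> JN J c" using e xy a by (auto simp: E4_def JN_def)
  thus False using s xy by auto
qed

lemma J1_sub: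
  assumes "E4 E J' \<subseteq> E4 E J" "\<forall>j\<in>J. card (nbrs (E4 E J) j) \<le> 1"
  shows "\<forall>j\<in>J'. card (nbrs (E4 E J') j) \<le> 1"
proof
  fix v assume "v \<in> J'"
  have sub: "nbrs (E4 E J') v \<subseteq> nbrs (E4 E J) v" using assms(1) by (auto simp: nbrs_def)
  have fin: "finite (nbrs (E4 E J) v)" by (rule fin_nb) (auto simp: E4_def)
  show "card (nbrs (E4 E J') v) \<le> 1"
  proof (cases "v \<in> J")
    case True
    have "card (nbrs (E4 E J') v) \<le> card (nbrs (E4 E J) v)" using card_mono[OF fin sub] .
    also have "\<dots> \<le> 1" using assms(2) True by blast
    finally show ?thesis .
  next
    case False hence "nbrs (E4 E J) v = {}" by (auto simp: E4_nb)
    hence "nbrs (E4 E J') v = {}" using sub by blast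
    thus ?thesis by simp
  qed
qed

lemma edge_sub: "e \<in> E \<Longrightarrow> e \<subseteq> V"
  using sg by (simp add: simple_graph_def)

lemma edge_other: "e \<in> E \<Longrightarrow> u \<in> e \<Longrightarrow> \<exists>w. w \<noteq> u \<and> e = {w,u}"
proof -
  assume "e \<in> E" "u \<in> e"
  then obtain x y where xy: "e = {x,y}" "x \<noteq> y" using edge_cases by blast
  show ?thesis
  proof (cases "u = x")
    case True thus ?thesis using xy by (intro exI[of _ y]) (auto simp: insert_commute)
  next
    case False hence "u = y" using xy \<open>u \<in> e\<close> by auto
    thus ?thesis using xy by (intro exI[of _ x]) auto
  qed
qed

lemma E4_empty: "E4 E {} = {}"
proof -
  have "e \<notin> E4 E {}" for e
  proof
    assume "e \<in> E4 E {}"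
    hence "e \<in> E" "e \<subseteq> {}" by (auto simp: E4_def)
    thus False using edge_cases by blast
  qed
  thus ?thesis by blast
qed

lemma card1_eq: "card A = 1 \<Longrightarrow> x \<in> A \<Longrightarrow> A = {x}"
  by (metis card_1_singletonE singletonD)

lemma main:
  assumes niceE: "\<forall>e\<in>E. \<not> isolated_edge E e" and Vne: "V \<noteq> {}"
  shows "\<exists>J. good_subset V E J"
proof -
  define C where "C = Collect pre"
  have "C \<subseteq> Pow V" by (auto simp: C_def pre_def)
  hence finC: "finite C" using finV by (meson finite_Pow_iff finite_subset)
  have "pre {}" unfolding pre_def E4_empty by simp
  hence Cne: "C \<noteq> {}" by (auto simp: C_def)
  define m where "m = Max (pot ` C)"
  have "m \<in> pot ` C" unfolding m_def using finC Cne by (intro Max_in) auto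
  then obtain J where JC: "J \<in> C" and Jm: "pot J = m" by blast
  have Jmax: "\<not> pot J < pot J'" if "pre J'" for J'
  proof -
    have "pot J' \<le> m" unfolding m_def using finC that by (intro Max_ge) (auto simp: C_def)
    thus ?thesis using Jm by auto
  qed
  have preJ: "pre J" using JC by (simp add: C_def)
  hence JV: "J \<subseteq> V" and J1: "\<forall>j\<in>J. card (nbrs (E4 E J) j) \<le> 1" by (auto simp: pre_def)
  from preJ obtain ie where ieinj: "inj_on ie (E4 E J)"
    and ieprop: "\<forall>e\<in>E4 E J. ie e \<in> V - J \<and> (\<forall>u\<in>e. {u, ie e} \<in> E)"
    by (auto simp: pre_def)
  have finJ: "finite J" using JV finV finite_subset by blast
  have finE4: "finite (E4 E J)" using finE by (auto simp: E4_def)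
  have ieK: "ie e \<noteq> c" if "e \<in> E4 E J" "JN J c \<subseteq> {j}" for e c j
  proof
    assume "ie e = c"
    thus False using K[OF that(1) _ that(2)] ieprop that(1) by auto
  qed
  have sub_pre: "pre J'" if "J' \<subseteq> V" "E4 E J' \<subseteq> E4 E J" "\<forall>e\<in>E4 E J'. ie e \<notin> J'" for J'
  proof -
    have "\<forall>j\<in>J'. card (nbrs (E4 E J') j) \<le> 1" using J1_sub[OF that(2) J1] .
    moreover have "inj_on ie (E4 E J')" using inj_on_subset[OF ieinj that(2)] .
    moreover have "\<forall>e\<in>E4 E J'. ie e \<in> V - J' \<and> (\<forall>u\<in>e. {u, ie e} \<in> E)"
      using ieprop that(2,3) by blast
    ultimately show ?thesis using that(1) unfolding pre_def by blast
  qed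
  have dom: "JN J u \<noteq> {}" if "u \<in> V" "u \<notin> J" for u
  proof
    assume N: "JN J u = {}"
    define J' where "J' = insert u J"
    have E4eq: "E4 E J' \<subseteq> E4 E J"
    proof
      fix e assume e: "e \<in> E4 E J'"
      hence eE: "e \<in> E" and eJ: "e \<subseteq> J'" by (auto simp: E4_def)
      have "u \<notin> e"
      proof
        assume "u \<in> e"
        then obtain w where w: "w \<noteq> u" "e = {w,u}" using edge_other eE by blast
        hence "w \<in> JN J u" using eJ eE by (auto simp: J'_def JN_def)
        thus False using N by simp
      qed
      thus "e \<in> E4 E J" using e by (auto simp: E4_def J'_def)
    qed
    have E4eq': "E4 E J \<subseteq> E4 E J'" by (auto simp: E4_def J'_def)
    have "pre J'"
    proof (rule sub_pre)
      show "J' \<subseteq> V" using JV that by (auto simp: J'_def)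
      show "E4 E J' \<subseteq> E4 E J" by fact
      show "\<forall>e\<in>E4 E J'. ie e \<notin> J'"
      proof
        fix e assume "e \<in> E4 E J'"
        hence e: "e \<in> E4 E J" using E4eq by blast
        have "ie e \<noteq> u" using ieK[OF e, of u u] N by simp
        thus "ie e \<notin> J'" using ieprop e by (auto simp: J'_def)
      qed
    qed
    moreover have "card J' = card J + 1" using finJ that by (simp add: J'_def)
    moreover have "E4 E J' = E4 E J" using E4eq E4eq' by blast
    ultimately have "pot J < pot J'" by (intro better) (simp add: phi_def)
    thus False using Jmax \<open>pre J'\<close> by blast
  qed
  have swap: "pre (insert p (J - {x})) \<and> E4 E (insert p (J - {x})) \<subseteq> E4 E J \<and>
      card (insert p (J - {x})) = card J"
    if p: "p \<in> V" "p \<notin> J" and x: "x \<in> J" and N: "JN J p = {x}" for p x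
  proof -
    define J' where "J' = insert p (J - {x})"
    have sub: "E4 E J' \<subseteq> E4 E J"
    proof
      fix e assume e: "e \<in> E4 E J'"
      hence eE: "e \<in> E" and eJ: "e \<subseteq> J'" by (auto simp: E4_def)
      have "p \<notin> e"
      proof
        assume "p \<in> e"
        then obtain w where w: "w \<noteq> p" "e = {w,p}" using edge_other eE by blast
        hence "w \<in> J - {x}" using eJ by (auto simp: J'_def)
        moreover hence "w \<in> JN J p" using w eE by (auto simp: JN_def)
        ultimately show False using N by simp
      qed
      thus "e \<in> E4 E J" using e by (auto simp: E4_def J'_def)
    qed
    have "pre J'"
    proof (rule sub_pre)
      show "J' \<subseteq> V" using JV p by (auto simp: J'_def)
      show "E4 E J' \<subseteq> E4 E J" by fact
      show "\<forall>e\<in>E4 E J'. ie e \<notin> J'"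
      proof
        fix e assume "e \<in> E4 E J'"
        hence e: "e \<in> E4 E J" using sub by blast
        have "ie e \<noteq> p" using ieK[OF e, of p x] N by simp
        thus "ie e \<notin> J'" using ieprop e by (auto simp: J'_def)
      qed
    qed
    moreover have "card J' = card J"
    proof -
      have "card (J - {x}) = card J - 1" using x finJ by simp
      moreover have "card J \<ge> 1" using x finJ card_0_eq[OF finJ] by fastforce
      ultimately show ?thesis using p finJ by (simp add: J'_def)
    qed
    ultimately show ?thesis using sub by (simp add: J'_def)
  qed
  have nopriv: "\<not> private_nbr V E J p x" if e: "e \<in> E4 E J" and xe: "x \<in> e" for e x p
  proof
    assume "private_nbr V E J p x"
    hence p: "p \<in> V" "p \<notin> J" and N: "JN J p = {x}" by (auto simp: priv)
    have x: "x \<in> J" using e xe by (auto simp: E4_def)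
    define J' where "J' = insert p (J - {x})"
    from swap[OF p x N] have pre': "pre J'" and sub: "E4 E J' \<subseteq> E4 E J" and cJ: "card J' = card J"
      by (auto simp: J'_def)
    have "x \<noteq> p" using x p by auto
    hence "e \<notin> E4 E J'" using xe by (auto simp: E4_def J'_def)
    hence "E4 E J' \<subset> E4 E J" using sub e by blast
    hence "card (E4 E J') < card (E4 E J)" using finE4 psubset_card_mono by blast
    hence "pot J < pot J'" using cJ by (intro better) (simp add: phi_def)
    thus False using Jmax pre' by blast
  qed
  have J3: "card {i. private_nbr V E J i j} \<le> 1" if j: "j \<in> J" for j
  proof (rule ccontr)
    assume nc: "\<not> card {i. private_nbr V E J i j} \<le> 1"
    have "{i. private_nbr V E J i j} \<subseteq> V" by (auto simp: priv)
    hence "finite {i. private_nbr V E J i j}" using finV finite_subset by blast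
    then obtain a b where ab: "private_nbr V E J a j" "private_nbr V E J b j" "a \<noteq> b"
      using nc card_le_Suc0_iff_eq by (metis (no_types, lifting) One_nat_def mem_Collect_eq)
    hence a: "a \<in> V" "a \<notin> J" "JN J a = {j}" and b: "b \<in> V" "b \<notin> J" "JN J b = {j}"
      by (auto simp: priv)
    have noJn: "{w,j} \<notin> E" if "w \<in> J" for w
    proof
      assume "{w,j} \<in> E"
      hence "{w,j} \<in> E4 E J" using that j by (auto simp: E4_def)
      thus False using nopriv[of "{w,j}" j a] ab(1) by auto
    qed
    have ja: "{j,a} \<in> E" and jb: "{j,b} \<in> E" using a(3) b(3) by (auto simp: JN_def)
    show False
    proof (cases "{a,b} \<in> E")
      case True
      define J' where "J' = insert a J"
      have E4eq: "E4 E J' = insert {j,a} (E4 E J)"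
      proof
        show "E4 E J' \<subseteq> insert {j,a} (E4 E J)"
        proof
          fix e assume e: "e \<in> E4 E J'"
          hence eE: "e \<in> E" and eJ: "e \<subseteq> J'" by (auto simp: E4_def)
          show "e \<in> insert {j,a} (E4 E J)"
          proof (cases "a \<in> e")
            case True
            then obtain w where w: "w \<noteq> a" "e = {w,a}" using edge_other eE by blast
            hence "w \<in> J" using eJ by (auto simp: J'_def)
            hence "w \<in> JN J a" using w eE by (auto simp: JN_def)
            hence "w = j" using a by simp
            thus ?thesis using w by simp
          next
            case False thus ?thesis using e by (auto simp: E4_def J'_def)
          qed
        qed
        show "insert {j,a} (E4 E J) \<subseteq> E4 E J'" using ja j by (auto simp: E4_def J'_def)
      qed
      have jaN: "{j,a} \<notin> E4 E J" using a by (auto simp: E4_def)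
      define ie' where "ie' = ie({j,a} := b)"
      have "pre J'"
        unfolding pre_def
      proof (intro conjI exI[of _ ie'])
        show "J' \<subseteq> V" using JV a by (auto simp: J'_def)
        show "\<forall>v\<in>J'. card (nbrs (E4 E J') v) \<le> 1"
        proof
          fix v assume v: "v \<in> J'"
          have nb: "w \<in> nbrs (E4 E J') v \<longleftrightarrow> {w,v} \<in> E \<and> w \<in> J' \<and> v \<in> J'" for w
            by (simp add: E4_nb)
          show "card (nbrs (E4 E J') v) \<le> 1"
          proof (cases "v = a")
            case True
            have "nbrs (E4 E J') v \<subseteq> {j}"
            proof
              fix w assume "w \<in> nbrs (E4 E J') v"
              hence w: "{w,a} \<in> E" "w \<in> J'" using nb True by auto
              hence "w \<noteq> a" using edge by blast
              hence "w \<in> JN J a" using w by (auto simp: J'_def JN_def)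
              thus "w \<in> {j}" using a by simp
            qed
            thus ?thesis using card_mono[of "{j}"] by fastforce
          next
            case va: False
            show ?thesis
            proof (cases "v = j")
              case True
              have "nbrs (E4 E J') v \<subseteq> {a}"
              proof
                fix w assume "w \<in> nbrs (E4 E J') v"
                hence w: "{w,j} \<in> E" "w \<in> J'" using nb True by auto
                thus "w \<in> {a}" using noJn by (auto simp: J'_def)
              qed
              thus ?thesis using card_mono[of "{a}"] by fastforce
            next
              case False
              have vJ: "v \<in> J" using v va by (simp add: J'_def)
              have "nbrs (E4 E J') v \<subseteq> nbrs (E4 E J) v"
              proof
                fix w assume "w \<in> nbrs (E4 E J') v"
                hence w: "{w,v} \<in> E" "w \<in> J'" using nb by auto
                have "w \<noteq> a"
                proof
                  assume "w = a"
                  hence "v \<in> JN J a" using w vJ by (auto simp: JN_def insert_commute)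
                  thus False using a False by simp
                qed
                thus "w \<in> nbrs (E4 E J) v" using w vJ by (auto simp: E4_nb J'_def)
              qed
              moreover have "finite (nbrs (E4 E J) v)" by (rule fin_nb) (auto simp: E4_def)
              ultimately show ?thesis using J1 vJ card_mono le_trans by blast
            qed
          qed
        qed
        have bK: "ie e \<noteq> b" if "e \<in> E4 E J" for e using ieK[OF that, of b j] b by simp
        have aK: "ie e \<noteq> a" if "e \<in> E4 E J" for e using ieK[OF that, of a j] a by simp
        have ie'eq: "ie' e = ie e" if "e \<in> E4 E J" for e
          using that jaN by (auto simp: ie'_def)
        show "inj_on ie' (E4 E J')"
          unfolding E4eq
        proof (rule inj_on_insert[THEN iffD2], rule conjI)
          show "inj_on ie' (E4 E J)" using ieinj ie'eq inj_on_cong by blast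
          show "ie' {j,a} \<notin> ie' ` (E4 E J - {{j,a}})"
            using bK ie'eq by (auto simp: ie'_def)
        qed
        show "\<forall>e\<in>E4 E J'. ie' e \<in> V - J' \<and> (\<forall>u\<in>e. {u, ie' e} \<in> E)"
          unfolding E4eq
        proof
          fix e assume "e \<in> insert {j,a} (E4 E J)"
          then consider "e = {j,a}" | "e \<in> E4 E J" by blast
          thus "ie' e \<in> V - J' \<and> (\<forall>u\<in>e. {u, ie' e} \<in> E)"
          proof cases
            case 1
            have "{a,b} \<in> E" by fact
            thus ?thesis using 1 b jb ab(3) by (auto simp: ie'_def J'_def)
          next
            case 2
            thus ?thesis using ieprop ie'eq aK by (auto simp: J'_def)
          qed
        qed
      qed
      moreover have "card J' = card J + 1" using finJ a by (simp add: J'_def)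
      moreover have "card (E4 E J') = card (E4 E J) + 1" using E4eq jaN finE4 by simp
      ultimately have "pot J < pot J'" by (intro better) (simp add: phi_def)
      thus False using Jmax \<open>pre J'\<close> by blast
    next
      case False
      define J' where "J' = insert a (insert b (J - {j}))"
      have sub: "E4 E J' \<subseteq> E4 E J"
      proof
        fix e assume e: "e \<in> E4 E J'"
        hence eE: "e \<in> E" and eJ: "e \<subseteq> J'" by (auto simp: E4_def)
        have "a \<notin> e"
        proof
          assume "a \<in> e"
          then obtain w where w: "w \<noteq> a" "e = {w,a}" using edge_other eE by blast
          show False
          proof (cases "w = b")
            case True thus False using w eE \<open>{a,b} \<notin> E\<close> by (simp add: insert_commute)
          next
            case False
            hence "w \<in> J - {j}" using w eJ by (auto simp: J'_def)
            moreover hence "w \<in> JN J a" using w eE by (auto simp: JN_def)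
            ultimately show False using a by simp
          qed
        qed
        moreover have "b \<notin> e"
        proof
          assume "b \<in> e"
          then obtain w where w: "w \<noteq> b" "e = {w,b}" using edge_other eE by blast
          show False
          proof (cases "w = a")
            case True thus False using w eE \<open>{a,b} \<notin> E\<close> by simp
          next
            case False
            hence "w \<in> J - {j}" using w eJ by (auto simp: J'_def)
            moreover hence "w \<in> JN J b" using w eE by (auto simp: JN_def)
            ultimately show False using b by simp
          qed
        qed
        ultimately show "e \<in> E4 E J" using e by (auto simp: E4_def J'_def)
      qed
      have "pre J'"
      proof (rule sub_pre)
        show "J' \<subseteq> V" using JV a b by (auto simp: J'_def)
        show "E4 E J' \<subseteq> E4 E J" by fact
        show "\<forall>e\<in>E4 E J'. ie e \<notin> J'"
        proof
          fix e assume "e \<in> E4 E J'"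
          hence e: "e \<in> E4 E J" using sub by blast
          have "ie e \<noteq> a" using ieK[OF e, of a j] a by simp
          moreover have "ie e \<noteq> b" using ieK[OF e, of b j] b by simp
          ultimately show "ie e \<notin> J'" using ieprop e by (auto simp: J'_def)
        qed
      qed
      moreover have "card J' = card J + 1"
      proof -
        have "card (J - {j}) = card J - 1" using j finJ by simp
        moreover have "card J \<ge> 1" using j finJ card_0_eq[OF finJ] by fastforce
        ultimately show ?thesis using a b ab(3) finJ by (simp add: J'_def)
      qed
      moreover have "card (E4 E J') \<le> card (E4 E J)" using card_mono[OF finE4 sub] .
      ultimately have "pot J < pot J'" by (intro better) (simp add: phi_def)
      thus False using Jmax \<open>pre J'\<close> by blast
    qed
  qed
  have J2: "\<not> isolated_edge (E3 E J) e" for e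
  proof
    assume iso: "isolated_edge (E3 E J) e"
    hence e3: "e \<in> E3 E J" and dg: "\<forall>v\<in>e. deg (E3 E J) v = 1"
      unfolding isolated_edge_def by blast+
    hence eE: "e \<in> E" and c1: "card (e \<inter> J) = 1" unfolding E3_def by blast+
    obtain p q where pq: "e = {p,q}" "p \<noteq> q" using edge_cases eE by blast
    obtain x y where xy: "e = {x,y}" "x \<in> J" "y \<notin> J"
    proof (cases "p \<in> J")
      case True
      have "q \<notin> J"
      proof
        assume "q \<in> J"
        hence "e \<inter> J = {p,q}" using True pq by auto
        thus False using c1 pq by simp
      qed
      thus ?thesis using that[of p q] pq True by simp
    next
      case False
      have "q \<in> J"
      proof (rule ccontr)
        assume "q \<notin> J"
        hence "e \<inter> J = {}" using False pq by auto
        thus False using c1 by simp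
      qed
      thus ?thesis using that[of q p] pq False by (simp add: insert_commute)
    qed
    have xyE: "{x,y} \<in> E" "{y,x} \<in> E" using eE xy by (auto simp: insert_commute)
    have yV: "y \<in> V" using edge xyE by blast
    have "deg (E3 E J) y = 1" using dg xy by simp
    moreover have "nbrs (E3 E J) y = JN J y" using xy(3) by (rule E3_out)
    ultimately have "card (JN J y) = 1" by (simp add: deg_def)
    moreover have "x \<in> JN J y" unfolding JN_def using xy(2) xyE(1) by blast
    ultimately have Ny: "JN J y = {x}" by (rule card1_eq)
    hence "private_nbr V E J y x" unfolding priv using yV xy(3) by blast
    have noE4: "{w,x} \<notin> E" if "w \<in> J" for w
    proof
      assume "{w,x} \<in> E"
      hence "{w,x} \<in> E4 E J" using that xy(2) unfolding E4_def by blast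
      thus False using nopriv[of "{w,x}" x y] \<open>private_nbr V E J y x\<close> by blast
    qed
    have "deg (E3 E J) x = 1" using dg xy by simp
    hence "card (nbrs (E3 E J) x) = 1" by (simp add: deg_def)
    moreover have "y \<in> nbrs (E3 E J) x" using xy xyE E3_in[of x J] by auto
    ultimately have N3x: "nbrs (E3 E J) x = {y}" by (rule card1_eq)
    have "nbrs E x = {y}"
    proof
      show "nbrs E x \<subseteq> {y}"
      proof
        fix u assume "u \<in> nbrs E x"
        hence u: "{u,x} \<in> E" by (simp add: nbrs_def)
        hence "u \<notin> J" using noE4 by blast
        hence "u \<in> nbrs (E3 E J) x" using u E3_in[of x J] xy by auto
        thus "u \<in> {y}" using N3x by simp
      qed
      show "{y} \<subseteq> nbrs E x" using xyE by (simp add: nbrs_def)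
    qed
    hence degx: "deg E x = 1" by (simp add: deg_def)
    have "\<not> isolated_edge E {x,y}" using niceE xyE by blast
    hence "deg E y \<noteq> 1" using degx xyE unfolding isolated_edge_def by simp
    moreover have "deg E y \<ge> 1"
    proof -
      have "x \<in> nbrs E y" using xyE by (simp add: nbrs_def)
      moreover have "finite (nbrs E y)" by (rule fin_nb) simp
      ultimately have "card (nbrs E y) > 0" using card_gt_0_iff by blast
      thus ?thesis unfolding deg_def by simp
    qed
    ultimately have dy: "deg E y > deg E x" using degx by simp
    define J' where "J' = insert y (J - {x})"
    from swap[OF yV xy(3) xy(2) Ny] have pre': "pre J'" and sub: "E4 E J' \<subseteq> E4 E J"
      and cJ: "card J' = card J" by (auto simp: J'_def)
    have "card (E4 E J') \<le> card (E4 E J)" using card_mono[OF finE4 sub] .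
    hence ph: "phi J \<le> phi J'" using cJ by (simp add: phi_def)
    have "sum (deg E) J' = deg E y + sum (deg E) (J - {x})"
      using finJ xy by (simp add: J'_def)
    moreover have "sum (deg E) J = deg E x + sum (deg E) (J - {x})"
      using sum.remove[OF finJ xy(2)] .
    ultimately have "sum (deg E) J < sum (deg E) J'" using dy by simp
    hence "pot J < pot J'" using ph cJ by (intro better) auto
    thus False using Jmax pre' by blast
  qed
  have Jne: "J \<noteq> {}"
  proof
    assume "J = {}"
    obtain v where "v \<in> V" using Vne by blast
    thus False using dom[of v] \<open>J = {}\<close> by (simp add: JN_def)
  qed
  have J4: "inj_on ie (E4 E J) \<and>
          (\<forall>e\<in>E4 E J. ie e \<in> V - J \<and> e \<subseteq> nbrs (E3 E J) (ie e) \<and>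
             (\<forall>j\<in>e. \<not> (\<exists>i. private_nbr V E J i j)))"
  proof (intro conjI ballI)
    show "inj_on ie (E4 E J)" by fact
    fix e assume e: "e \<in> E4 E J"
    show "ie e \<in> V - J" using ieprop e by blast
    show "e \<subseteq> nbrs (E3 E J) (ie e)"
    proof
      fix u assume "u \<in> e"
      hence "u \<in> J" "{u, ie e} \<in> E" using e ieprop by (auto simp: E4_def)
      moreover have "ie e \<notin> J" using ieprop e by blast
      ultimately show "u \<in> nbrs (E3 E J) (ie e)" by (simp add: E3_out JN_def)
    qed
    fix j assume "j \<in> e"
    thus "\<not> (\<exists>i. private_nbr V E J i j)" using nopriv e by blast
  qed
  have J5: "\<forall>e\<in>E2 E J. \<forall>v\<in>e. \<exists>j\<in>J. {v, j} \<in> E"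
  proof (intro ballI)
    fix e v assume e: "e \<in> E2 E J" and v: "v \<in> e"
    hence "e \<in> E" "e \<inter> J = {}" by (auto simp: E2_def isolated_edge_def del_edges_def)
    hence "v \<in> V" "v \<notin> J" using v edge_sub by auto
    then obtain w where "w \<in> JN J v" using dom by blast
    thus "\<exists>j\<in>J. {v, j} \<in> E" by (auto simp: JN_def insert_commute)
  qed
  have "good_subset V E J"
    unfolding good_subset_def
  proof (intro conjI)
    show "J \<subseteq> V" by fact
    show "J \<noteq> {}" by fact
    show "\<forall>j\<in>J. deg (E4 E J) j \<le> 1" using J1 by (simp add: deg_def)
    show "\<forall>e. \<not> isolated_edge (E3 E J) e" using J2 by blast
    show "\<forall>j\<in>J. card {i. private_nbr V E J i j} \<le> 1" using J3 by blast
    show "\<exists>ie. inj_on ie (E4 E J) \<and>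
          (\<forall>e\<in>E4 E J. ie e \<in> V - J \<and> e \<subseteq> nbrs (E3 E J) (ie e) \<and>
             (\<forall>j\<in>e. \<not> (\<exists>i. private_nbr V E J i j)))"
      by (rule exI[of _ ie]) (rule J4)
    show "\<forall>e\<in>E2 E J. \<forall>v\<in>e. \<exists>j\<in>J. {v, j} \<in> E" by fact
  qed
  thus ?thesis by blast
qed

end

theorem lemma4p1:
  fixes V :: "'a set" and E :: "'a set set"
  assumes "nice V E" and "V \<noteq> {}"
  shows "\<exists>J. good_subset V E J"
proof -
  have sgr: "simple_graph V E" and ne: "\<forall>e\<in>E. \<not> isolated_edge E e"
    using assms(1) by (auto simp: nice_def)
  interpret sg V E by (rule sg.intro[OF sgr])
  show ?thesis using main[OF ne assms(2)] .
qed

end
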